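(* Let $(E,\mathcal{E},\mu)$ be a $\sigma$-finite measure space and let $f:E\to\mathbb{R}$ be $\mathcal{E}/\mathcal{B}(\mathbb{R})$-measurable with $f(x)\ge 0$ for all $x\in E$ and $K:=\int_E f(x)\,\mu(dx)\in(0,\infty)$. Let $\nu$ be the measure on $(E\times\mathbb{R},\mathcal{E}\otimes\mathcal{B}(\mathbb{R}))$ given by $\nu(C)=\iint_{E\times\mathbb{R}}1_C(x,y)\,\mu(dx)\,dy$, and let $\Gamma[f]=\{(x,y)\in E\times\mathbb{R}: 0\le y\le f(x)\}$. Let $N\in\mathbb{N}$ and let $B_1,\dots,B_N\in\mathcal{E}\otimes\mathcal{B}(\mathbb{R})$ with $B:=\bigcup_{i=1}^N B_i$ satisfy: $\nu(B_i)>0$ for all $i$; $\nu(B_i\cap B_j)=0$ for $i\ne j$; $\nu(\Gamma[f]\setminus B)=0$ and $\nu(B)<\infty$. Define $\Psi:[0,1)\to\{1,\dots,N\}$ by $\Psi(u)=\min\{i\in\{1,\dots,N\}: u<\sum_{j=1}^i \nu(B_j)/\nu(B)\}$, set $B_i[f]:=B_i\cap\Gamma[f]$, and define $$\Lambda:=\{(u,v_1,\dots,v_N,w_1,\dots,w_N)\in[0,1)\times E^N\times\mathbb{R}^N : (v_{\Psi(u)},w_{\Psi(u)})\in B_{\Psi(u)}[f]\}.$$ Let $(\Omega,\mathcal{F},P)$ be a probability space carrying real random variables $U,W_1,\dots,W_N$ and $(E,\mathcal{E})$-valued random variables $V_1,\dots,V_N$ such that, for each $i=1,\dots,N$, $(V_i,W_i)$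 and $U$ are independent, $P((V_i,W_i)\in C)=\nu(C\cap B_i)/\nu(B_i)$ for all $C\in\mathcal{E}\otimes\mathcal{B}(\mathbb{R})$, and $U$ is uniformly distributed on $[0,1)$ (i.e. $P(U\in D)=\int_D 1_{[0,1)}(u)\,du$ for $D\in\mathcal{B}(\mathbb{R})$). Let $Z:=(U,V_1,\dots,V_N,W_1,\dots,W_N)$. Then for every $A\in\mathcal{E}$, $$P\big(V_{\Psi(U)}\in A,\ Z\in\Lambda\big)=\frac{1}{\nu(B)}\int_A f(x)\,\mu(dx).$$
   Context: $\mathcal{B}(\mathbb{R})$ denotes the Borel $\sigma$-algebra of $\mathbb{R}$ and $\mathcal{E}\otimes\mathcal{B}(\mathbb{R})$ the product $\sigma$-algebra. $V_{\Psi(U)}$ denotes the random variable $\omega\mapsto V_{\Psi(U(\omega))}(\omega)$ (on the event $U\in[0,1)$, which has probability one). *)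

theory Defs
  imports "HOL-Probability.Probability"
begin

definition Gamma :: "'e measure \<Rightarrow> ('e \<Rightarrow> real) \<Rightarrow> ('e \<times> real) set" where
  "Gamma M f = {(x, y). x \<in> space M \<and> 0 \<le> y \<and> y \<le> f x}"

definition Bunion :: "nat \<Rightarrow> (nat \<Rightarrow> 'b set) \<Rightarrow> 'b set" where
  "Bunion N B = (\<Union>i\<in>{1..N}. B i)"

definition Psi :: "'b measure \<Rightarrow> nat \<Rightarrow> (nat \<Rightarrow> 'b set) \<Rightarrow> real \<Rightarrow> nat" where
  "Psi nu N B u = (LEAST i. i \<in> {1..N} \<and>
      u < (\<Sum>j=1..i. measure nu (B j) / measure nu (Bunion N B)))"

text \<open>Lambda, with points (u, v, w) where v, w are the vectors (v_1..v_N), (w_1..w_N),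
  represented as functions on indices (only indices 1..N matter).\<close>
definition Lambda :: "'e measure \<Rightarrow> ('e \<Rightarrow> real) \<Rightarrow> nat \<Rightarrow> (nat \<Rightarrow> ('e \<times> real) set)
    \<Rightarrow> (real \<times> (nat \<Rightarrow> 'e) \<times> (nat \<Rightarrow> real)) set" where
  "Lambda M f N B = {(u, v, w). u \<in> {0..<1} \<and> (\<forall>i\<in>{1..N}. v i \<in> space M) \<and>
      (v (Psi (M \<Otimes>\<^sub>M lborel) N B u), w (Psi (M \<Otimes>\<^sub>M lborel) N B u))
        \<in> B (Psi (M \<Otimes>\<^sub>M lborel) N B u) \<inter> Gamma M f}"

end

theory Submission
  imports Defs
begin

lemma Gamma_sets:
  assumes "f \<in> borel_measurable M"
  shows "Gamma M f \<in> sets (M \<Otimes>\<^sub>M lborel)"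
proof -
  have "Gamma M f = {p \<in> space (M \<Otimes>\<^sub>M lborel). 0 \<le> snd p \<and> snd p \<le> f (fst p)}"
    by (auto simp: Gamma_def space_pair_measure)
  also have "\<dots> \<in> sets (M \<Otimes>\<^sub>M lborel)"
    using assms by measurable
  finally show ?thesis .
qed

lemma Gamma_emeasure:
  assumes "f \<in> borel_measurable M" "\<forall>x\<in>space M. f x \<ge> 0" "A \<in> sets M"
  shows "emeasure (M \<Otimes>\<^sub>M lborel) ((A \<times> UNIV) \<inter> Gamma M f)
     = (\<integral>\<^sup>+ x. ennreal (f x) * indicator A x \<partial>M)"
proof -
  have S: "(A \<times> UNIV) \<inter> Gamma M f \<in> sets (M \<Otimes>\<^sub>M lborel)"
    using Gamma_sets[OF assms(1)] assms(3)
    by (metis pair_measureI sets.Int sets_lborel sets.top space_borel)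
  have "emeasure (M \<Otimes>\<^sub>M lborel) ((A \<times> UNIV) \<inter> Gamma M f)
      = (\<integral>\<^sup>+x. emeasure lborel (Pair x -` ((A \<times> UNIV) \<inter> Gamma M f)) \<partial>M)"
    by (rule lborel.emeasure_pair_measure_alt[OF S])
  also have "\<dots> = (\<integral>\<^sup>+ x. ennreal (f x) * indicator A x \<partial>M)"
  proof (rule nn_integral_cong)
    fix x assume x: "x \<in> space M"
    show "emeasure lborel (Pair x -` ((A \<times> UNIV) \<inter> Gamma M f)) = ennreal (f x) * indicator A x"
    proof (cases "x \<in> A")
      case True
      then have "Pair x -` ((A \<times> UNIV) \<inter> Gamma M f) = {0..f x}"
        using x by (auto simp: Gamma_def)
      then show ?thesis using True x assms(2) by simp
    next
      case False
      then have "Pair x -` ((A \<times> UNIV) \<inter> Gamma M f) = {}" by auto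
      then show ?thesis using False by simp
    qed
  qed
  finally show ?thesis .
qed

lemma ae_sum_lemma:
  assumes fin: "finite I" and Bs: "\<And>i. i \<in> I \<Longrightarrow> B i \<in> sets nu"
    and dis: "\<forall>i\<in>I. \<forall>j\<in>I. i \<noteq> j \<longrightarrow> emeasure nu (B i \<inter> B j) = 0"
    and X: "X \<in> sets nu" "emeasure nu (X - (\<Union>i\<in>I. B i)) = 0" "emeasure nu X < \<infinity>"
  shows "measure nu X = (\<Sum>i\<in>I. measure nu (X \<inter> B i))"
proof -
  have BU: "(\<Union>i\<in>I. B i) \<in> sets nu" using fin Bs by auto
  have null: "X - (\<Union>i\<in>I. B i) \<in> null_sets nu" using X BU by (auto intro: null_setsI)
  have "measure nu X = measure nu (X - (X - (\<Union>i\<in>I. B i)))"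
    using measure_Diff_null_set[OF X(1) null] by simp
  also have "X - (X - (\<Union>i\<in>I. B i)) = (\<Union>i\<in>I. X \<inter> B i)" by auto
  also have "measure nu \<dots> = (\<Sum>i\<in>I. measure nu (X \<inter> B i))"
  proof (rule measure_UNION_AE[OF fin])
    fix i assume i: "i \<in> I"
    have "emeasure nu (X \<inter> B i) \<le> emeasure nu X" using X Bs[OF i] by (intro emeasure_mono) auto
    then show "X \<inter> B i \<in> fmeasurable nu" using X Bs[OF i]
      by (intro fmeasurableI) auto
  next
    show "pairwise (\<lambda>i j. AE x in nu. x \<notin> X \<inter> B i \<or> x \<notin> X \<inter> B j) I"
    proof (rule pairwiseI)
      fix i j assume ij: "i \<in> I" "j \<in> I" "i \<noteq> j"
      have "B i \<inter> B j \<in> null_sets nu" using ij dis Bs by (intro null_setsI) auto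
      then show "AE x in nu. x \<notin> X \<inter> B i \<or> x \<notin> X \<inter> B j"
        by (rule AE_I') auto
    qed
  qed
  finally show ?thesis .
qed

theorem lemma2p1:
  fixes M :: "'e measure" and f :: "'e \<Rightarrow> real" and N :: nat
    and B :: "nat \<Rightarrow> ('e \<times> real) set"
    and P :: "'w measure" and U :: "'w \<Rightarrow> real"
    and V :: "nat \<Rightarrow> 'w \<Rightarrow> 'e" and W :: "nat \<Rightarrow> 'w \<Rightarrow> real"
  assumes "sigma_finite_measure M"
    and "f \<in> borel_measurable M"
    and "\<forall>x\<in>space M. f x \<ge> 0"
    and "(\<integral>\<^sup>+ x. ennreal (f x) \<partial>M) > 0"
    and "(\<integral>\<^sup>+ x. ennreal (f x) \<partial>M) < \<infinity>"
    and "\<forall>i\<in>{1..N}. B i \<in> sets (M \<Otimes>\<^sub>M lborel)"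
    and "\<forall>i\<in>{1..N}. emeasure (M \<Otimes>\<^sub>M lborel) (B i) > 0"
    and "\<forall>i\<in>{1..N}. \<forall>j\<in>{1..N}. i \<noteq> j \<longrightarrow> emeasure (M \<Otimes>\<^sub>M lborel) (B i \<inter> B j) = 0"
    and "emeasure (M \<Otimes>\<^sub>M lborel) (Gamma M f - Bunion N B) = 0"
    and "emeasure (M \<Otimes>\<^sub>M lborel) (Bunion N B) < \<infinity>"
    and "prob_space P"
    and "U \<in> borel_measurable P"
    and "\<forall>i\<in>{1..N}. V i \<in> measurable P M"
    and "\<forall>i\<in>{1..N}. W i \<in> borel_measurable P"
    and "\<forall>i\<in>{1..N}. \<forall>C\<in>sets (M \<Otimes>\<^sub>M lborel). \<forall>D\<in>sets borel.
           measure P {\<omega>\<in>space P. (V i \<omega>, W i \<omega>) \<in> C \<and> U \<omega> \<in> D}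
             = measure P {\<omega>\<in>space P. (V i \<omega>, W i \<omega>) \<in> C} * measure P {\<omega>\<in>space P. U \<omega> \<in> D}"
    and "\<forall>i\<in>{1..N}. \<forall>C\<in>sets (M \<Otimes>\<^sub>M lborel).
           measure P {\<omega>\<in>space P. (V i \<omega>, W i \<omega>) \<in> C}
             = measure (M \<Otimes>\<^sub>M lborel) (C \<inter> B i) / measure (M \<Otimes>\<^sub>M lborel) (B i)"
    and "\<forall>D\<in>sets borel. emeasure P {\<omega>\<in>space P. U \<omega> \<in> D}
           = (\<integral>\<^sup>+ u. indicator D u * indicator {0..<1} u \<partial>lborel)"
    and "A \<in> sets M"
  shows "measure P {\<omega>\<in>space P.
            V (Psi (M \<Otimes>\<^sub>M lborel) N B (U \<omega>)) \<omega> \<in> A \<and>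
            (U \<omega>, (\<lambda>i. V i \<omega>), (\<lambda>i. W i \<omega>)) \<in> Lambda M f N B}
         = (1 / measure (M \<Otimes>\<^sub>M lborel) (Bunion N B)) * (\<integral>x\<in>A. f x \<partial>M)"
proof -
  note a = assms
  define nu where "nu = M \<Otimes>\<^sub>M (lborel :: real measure)"
  define BB where "BB = Bunion N B"
  define b where "b = measure nu BB"
  define G where "G = (A \<times> UNIV) \<inter> Gamma M f"
  define s where "s = (\<lambda>i. \<Sum>j=1..i. measure nu (B j) / measure nu BB)"
  interpret P: prob_space P by (rule a(11))
  have Bs: "\<And>i. i \<in> {1..N} \<Longrightarrow> B i \<in> sets nu" using a(6) by (simp add: nu_def)
  have BBs: "BB \<in> sets nu" using Bs by (auto simp: BB_def Bunion_def)
  have BBfin: "emeasure nu BB < \<infinity>" using a(10) by (simp add: nu_def BB_def)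
  have Bfin: "emeasure nu (B i) < \<infinity>" if "i \<in> {1..N}" for i
  proof -
    have "emeasure nu (B i) \<le> emeasure nu BB"
      using that Bs BBs by (intro emeasure_mono) (auto simp: BB_def Bunion_def)
    then show ?thesis using BBfin by simp
  qed
  have Bpos: "measure nu (B i) > 0" if "i \<in> {1..N}" for i
    using Bfin[OF that] a(7) that by (simp add: nu_def measure_def enn2real_positive_iff)
  have Gams: "Gamma M f \<in> sets nu" using Gamma_sets[OF a(2)] by (simp add: nu_def)
  have Gs: "G \<in> sets nu" unfolding G_def nu_def
    using Gamma_sets[OF a(2)] a(18)
    by (metis pair_measureI sets.Int sets_lborel sets.top space_borel)
  have Gem: "emeasure nu G = (\<integral>\<^sup>+ x. ennreal (f x) * indicator A x \<partial>M)"
    unfolding G_def nu_def by (rule Gamma_emeasure[OF a(2) a(3) a(18)])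
  have Gamem: "emeasure nu (Gamma M f) = (\<integral>\<^sup>+ x. ennreal (f x) \<partial>M)"
  proof -
    have "Gamma M f = (space M \<times> UNIV) \<inter> Gamma M f" by (auto simp: Gamma_def)
    then have "emeasure nu (Gamma M f) = (\<integral>\<^sup>+ x. ennreal (f x) * indicator (space M) x \<partial>M)"
      unfolding nu_def using Gamma_emeasure[OF a(2) a(3) sets.top] by simp
    also have "\<dots> = (\<integral>\<^sup>+ x. ennreal (f x) \<partial>M)"
      by (rule nn_integral_cong) simp
    finally show ?thesis .
  qed
  have Gfin: "emeasure nu G < \<infinity>"
  proof -
    have "emeasure nu G \<le> emeasure nu (Gamma M f)"
      using Gs Gams by (intro emeasure_mono) (auto simp: G_def)
    then show ?thesis using Gamem a(5) by simp
  qed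
  have GBnull: "emeasure nu (X - BB) = 0" if "X \<subseteq> Gamma M f" "X \<in> sets nu" for X
  proof -
    have "emeasure nu (X - BB) \<le> emeasure nu (Gamma M f - BB)"
      using that Gams BBs by (intro emeasure_mono) auto
    then show ?thesis using a(9) by (simp add: nu_def BB_def)
  qed
  have BBU: "BB = (\<Union>i\<in>{1..N}. B i)" by (simp add: BB_def Bunion_def)
  have dis: "\<forall>i\<in>{1..N}. \<forall>j\<in>{1..N}. i \<noteq> j \<longrightarrow> emeasure nu (B i \<inter> B j) = 0"
    using a(8) by (simp add: nu_def)
  have sumG: "measure nu G = (\<Sum>i\<in>{1..N}. measure nu (G \<inter> B i))"
    using ae_sum_lemma[of "{1..N}" B nu G] Bs dis Gs Gfin GBnull[of G] BBU
    by (auto simp: G_def)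
  have sumB: "b = (\<Sum>i\<in>{1..N}. measure nu (B i))"
  proof -
    have "b = (\<Sum>i\<in>{1..N}. measure nu (BB \<inter> B i))"
      unfolding b_def using ae_sum_lemma[of "{1..N}" B nu BB] Bs dis BBs BBfin BBU by auto
    also have "\<dots> = (\<Sum>i\<in>{1..N}. measure nu (B i))"
    proof (intro sum.cong refl)
      fix x assume "x \<in> {1..N}"
      then have "BB \<inter> B x = B x" by (auto simp: BBU)
      then show "measure nu (BB \<inter> B x) = measure nu (B x)" by simp
    qed
    finally show ?thesis .
  qed
  have Npos: "N \<ge> 1"
  proof (rule ccontr)
    assume "\<not> N \<ge> 1"
    then have "BB = {}" by (simp add: BBU)
    then have "emeasure nu (Gamma M f) = 0" using GBnull[OF order.refl Gams] by simp
    then show False using Gamem a(4) by simp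
  qed
  have bpos: "b > 0"
    unfolding sumB using Npos Bpos by (intro sum_pos) auto
  have s_def': "s i = (\<Sum>j=1..i. measure nu (B j) / b)" for i
    by (simp add: s_def b_def)
  have s0: "s 0 = 0" by (simp add: s_def)
  have sN: "s N = 1"
    unfolding s_def' using bpos by (simp add: sum_divide_distrib[symmetric] sumB)
  have smono: "s i \<le> s j" if "i \<le> j" "j \<le> N" for i j
  proof -
    have nn: "0 \<le> measure nu (B k) / b" if "k \<in> {1..j} - {1..i}" for k
      using that \<open>j \<le> N\<close> Bpos[of k] bpos by auto
    show ?thesis unfolding s_def' by (rule sum_mono2) (use nn \<open>i \<le> j\<close> in auto)
  qed
  have sstep: "s i - s (i - 1) = measure nu (B i) / b" if "i \<ge> 1" for i
  proof (cases i)
    case 0 with that show ?thesis by simp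
  next
    case (Suc k) then show ?thesis unfolding s_def' by simp
  qed
  have PsiE: "Psi nu N B u = (LEAST i. i \<in> {1..N} \<and> u < s i)" for u
    by (simp add: Psi_def s_def BB_def)
  have Psi_eq: "Psi nu N B u = i" if i: "i \<in> {1..N}" "s (i - 1) \<le> u" "u < s i" for i u
    unfolding PsiE
  proof (rule Least_equality)
    show "i \<in> {1..N} \<and> u < s i" using i by simp
  next
    fix y assume y: "y \<in> {1..N} \<and> u < s y"
    show "i \<le> y"
    proof (rule ccontr)
      assume "\<not> i \<le> y"
      then have "s y \<le> s (i - 1)" using i by (intro smono) auto
      then show False using y i by simp
    qed
  qed
  have Psi_in: "Psi nu N B u \<in> {1..N} \<and> s (Psi nu N B u - 1) \<le> u \<and> u < s (Psi nu N B u)"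
    if u: "0 \<le> u" "u < 1" for u
  proof -
    have ex: "N \<in> {1..N} \<and> u < s N" using Npos u sN by simp
    define k where "k = Psi nu N B u"
    have k1: "k \<in> {1..N} \<and> u < s k"
      unfolding k_def PsiE by (rule LeastI[of _ N]) (rule ex)
    have k2: "s (k - 1) \<le> u"
    proof (cases "k = 1")
      case True then show ?thesis using s0 u by simp
    next
      case False
      then have "k - 1 < k" using k1 by auto
      then have "\<not> (k - 1 \<in> {1..N} \<and> u < s (k - 1))"
        unfolding k_def PsiE by (rule not_less_Least)
      then show ?thesis using False k1 by auto
    qed
    show ?thesis using k1 k2 by (simp add: k_def)
  qed
  define pc where "pc = (\<lambda>i. {\<omega>\<in>space P. (V i \<omega>, W i \<omega>) \<in> G \<inter> B i \<and> U \<omega> \<in> {s (i - 1)..<s i}})"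
  have Vsp: "V i \<omega> \<in> space M" if "i \<in> {1..N}" "\<omega> \<in> space P" for i \<omega>
    using measurable_space[OF bspec[OF a(13) that(1)] that(2)] .
  have sint: "0 \<le> s (i - 1) \<and> s i \<le> 1" if "i \<in> {1..N}" for i
    using smono[of 0 "i - 1"] smono[of i N] that s0 sN by auto
  have Eeq: "{\<omega>\<in>space P. V (Psi (M \<Otimes>\<^sub>M lborel) N B (U \<omega>)) \<omega> \<in> A \<and>
            (U \<omega>, (\<lambda>i. V i \<omega>), (\<lambda>i. W i \<omega>)) \<in> Lambda M f N B} = (\<Union>i\<in>{1..N}. pc i)"
  proof (intro equalityI subsetI)
    fix \<omega> assume "\<omega> \<in> {\<omega>\<in>space P. V (Psi (M \<Otimes>\<^sub>M lborel) N B (U \<omega>)) \<omega> \<in> A \<and>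
            (U \<omega>, (\<lambda>i. V i \<omega>), (\<lambda>i. W i \<omega>)) \<in> Lambda M f N B}"
    then have w: "\<omega> \<in> space P" "V (Psi nu N B (U \<omega>)) \<omega> \<in> A" "U \<omega> \<in> {0..<1}"
       "(V (Psi nu N B (U \<omega>)) \<omega>, W (Psi nu N B (U \<omega>)) \<omega>) \<in> B (Psi nu N B (U \<omega>)) \<inter> Gamma M f"
      by (auto simp: Lambda_def nu_def)
    define k where "k = Psi nu N B (U \<omega>)"
    have "k \<in> {1..N} \<and> s (k - 1) \<le> U \<omega> \<and> U \<omega> < s k" using Psi_in[of "U \<omega>"] w(3) by (simp add: k_def)
    moreover have "\<omega> \<in> pc k" using w calculation unfolding pc_def G_def k_def[symmetric] by auto
    ultimately show "\<omega> \<in> (\<Union>i\<in>{1..N}. pc i)" by blast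
  next
    fix \<omega> assume "\<omega> \<in> (\<Union>i\<in>{1..N}. pc i)"
    then obtain i where i: "i \<in> {1..N}" "\<omega> \<in> pc i" by blast
    then have w: "\<omega> \<in> space P" "(V i \<omega>, W i \<omega>) \<in> G \<inter> B i" "s (i - 1) \<le> U \<omega>" "U \<omega> < s i"
      by (auto simp: pc_def)
    have ps: "Psi nu N B (U \<omega>) = i" using Psi_eq[OF i(1) w(3) w(4)] .
    have "U \<omega> \<in> {0..<1}" using sint[OF i(1)] w by auto
    then show "\<omega> \<in> {\<omega>\<in>space P. V (Psi (M \<Otimes>\<^sub>M lborel) N B (U \<omega>)) \<omega> \<in> A \<and>
            (U \<omega>, (\<lambda>i. V i \<omega>), (\<lambda>i. W i \<omega>)) \<in> Lambda M f N B}"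
      using w ps Vsp by (auto simp: Lambda_def G_def nu_def[symmetric])
  qed
  have Xm: "(\<lambda>\<omega>. (V i \<omega>, W i \<omega>)) \<in> measurable P nu" if "i \<in> {1..N}" for i
    unfolding nu_def using a(13) a(14) that by (intro measurable_Pair) auto
  have setm: "{\<omega>\<in>space P. X \<omega> \<in> C} \<in> sets P" if "X \<in> measurable P K" "C \<in> sets K" for X K C
  proof -
    have "{\<omega>\<in>space P. X \<omega> \<in> C} = X -` C \<inter> space P" by auto
    then show ?thesis using measurable_sets[OF that] by simp
  qed
  have pcs: "pc i \<in> sets P" if "i \<in> {1..N}" for i
  proof -
    have "pc i = {\<omega>\<in>space P. (V i \<omega>, W i \<omega>) \<in> G \<inter> B i} \<inter> {\<omega>\<in>space P. U \<omega> \<in> {s (i - 1)..<s i}}"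
      by (auto simp: pc_def)
    then show ?thesis using setm[OF Xm[OF that], of "G \<inter> B i"] setm[OF a(12), of "{s (i - 1)..<s i}"]
      Gs Bs[OF that] by auto
  qed
  have disj: "disjoint_family_on pc {1..N}"
    unfolding disjoint_family_on_def
  proof (intro ballI impI)
    fix i j assume ij: "i \<in> {1..N}" "j \<in> {1..N}" "i \<noteq> j"
    show "pc i \<inter> pc j = {}"
    proof (cases "i < j")
      case True
      then have "s i \<le> s (j - 1)" using ij by (intro smono) auto
      then show ?thesis by (auto simp: pc_def)
    next
      case False
      then have "s j \<le> s (i - 1)" using ij by (intro smono) auto
      then show ?thesis by (auto simp: pc_def)
    qed
  qed
  have Uprob: "measure P {\<omega>\<in>space P. U \<omega> \<in> {s (i - 1)..<s i}} = measure nu (B i) / b"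
    if i: "i \<in> {1..N}" for i
  proof -
    have "emeasure P {\<omega>\<in>space P. U \<omega> \<in> {s (i - 1)..<s i}}
        = (\<integral>\<^sup>+ u. indicator {s (i - 1)..<s i} u * indicator {0..<1} u \<partial>lborel)"
      using bspec[OF a(17), of "{s (i - 1)..<s i}"] by simp
    also have "\<dots> = (\<integral>\<^sup>+ u. indicator {s (i - 1)..<s i} u \<partial>lborel)"
      using sint[OF i] by (intro nn_integral_cong) (auto split: split_indicator)
    also have "\<dots> = ennreal (s i - s (i - 1))"
      using smono[of "i - 1" i] i by simp
    finally show ?thesis using sstep[of i] i smono[of "i - 1" i]
      by (simp add: measure_def)
  qed
  have pcm: "measure P (pc i) = measure nu (G \<inter> B i) / b" if i: "i \<in> {1..N}" for i
  proof -
    have GBs: "G \<inter> B i \<in> sets (M \<Otimes>\<^sub>M lborel)" using Gs Bs[OF i] by (simp add: nu_def)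
    have "measure P (pc i) = measure P {\<omega>\<in>space P. (V i \<omega>, W i \<omega>) \<in> G \<inter> B i}
        * measure P {\<omega>\<in>space P. U \<omega> \<in> {s (i - 1)..<s i}}"
      unfolding pc_def using a(15)[rule_format, OF i GBs, of "{s (i - 1)..<s i}"] by simp
    also have "\<dots> = measure nu (G \<inter> B i) / measure nu (B i) * (measure nu (B i) / b)"
      using a(16)[rule_format, OF i GBs] Uprob[OF i] by (simp add: nu_def Int_assoc)
    also have "\<dots> = measure nu (G \<inter> B i) / b" using Bpos[OF i] by simp
    finally show ?thesis .
  qed
  have "measure P (\<Union>i\<in>{1..N}. pc i) = (\<Sum>i\<in>{1..N}. measure P (pc i))"
    using pcs disj by (intro measure_finite_Union) auto
  also have "\<dots> = (\<Sum>i\<in>{1..N}. measure nu (G \<inter> B i)) / b"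
    by (simp add: pcm sum_divide_distrib)
  also have "\<dots> = measure nu G / b" using sumG by simp
  also have "measure nu G = (\<integral>x\<in>A. f x \<partial>M)"
  proof -
    have "(\<integral>x\<in>A. f x \<partial>M) = enn2real (\<integral>\<^sup>+ x. ennreal (indicator A x *\<^sub>R f x) \<partial>M)"
      unfolding set_lebesgue_integral_def using a(2) a(3) a(18)
      by (intro integral_eq_nn_integral) (auto simp: indicator_def)
    also have "(\<integral>\<^sup>+ x. ennreal (indicator A x *\<^sub>R f x) \<partial>M) = (\<integral>\<^sup>+ x. ennreal (f x) * indicator A x \<partial>M)"
      by (intro nn_integral_cong) (auto split: split_indicator)
    finally show ?thesis using Gem by (simp add: measure_def)
  qed
  finally show ?thesis using Eeq by (simp add: b_def BB_def nu_def)
qed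

end
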